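(* Under the standing assumptions below, fix $k\ge1$ and define recursively, for $h\ge1$, $$\widetilde{X'_k}(h)=-\sum_{j=1}^{h-1}a_j\,\widetilde{X'_k}(h-j)-\sum_{j=1}^{k}a_{h-1+j}X_{k+1-j}$$ (the $h$-step truncated Wiener–Kolmogorov predictor of order $k$; the first sum is empty for $h=1$). Then for every $h\ge1$, $$X_{k+h}-\widetilde{X'_k}(h)=\sum_{l=0}^{h-1}b_l\,\varepsilon_{k+h-l}-\sum_{j=k+1}^{\infty}\Big(\sum_{m=0}^{h-1}a_{j+h-1-m}\,b_m\Big)X_{k+1-j},$$ and consequently $$\mathbb E\big[(\widetilde{X'_k}(h)-X_{k+h})^2\big]=\sigma_\varepsilon^2\sum_{l=0}^{h-1}b_l^2+\mathbb E\Big[\Big(\sum_{j=k+1}^{\infty}\Big(\sum_{m=0}^{h-1}a_{j+h-1-m}b_m\Big)X_{k+1-j}\Big)^2\Big].$$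
   Context: Standing assumptions. Let $(X_n)_{n\in\mathbb Z}$ be a real, zero-mean, weakly stationary process in $L^2$ with autocovariance function $\sigma(j)=\mathbb E[X_nX_{n+j}]$, satisfying $\sum_{j\in\mathbb Z}|\sigma(j)|=\infty$. Assume $X_n=\sum_{j\ge0}b_j\varepsilon_{n-j}$ (convergence in $L^2$). Here $(\varepsilon_n)_{n\in\mathbb Z}$ is a sequence of uncorrelated random variables with mean $0$ and variance $\sigma_\varepsilon^2>0$, and $b_0=1$, $\sum_j b_j^2<\infty$. Assume also $\varepsilon_n=\sum_{j\ge0}a_jX_{n-j}$ with $a_0=1$ and $\sum_j|a_j|<\infty$. The power series $A(z)=\sum_{j\ge0}a_jz^j$ and $B(z)=\sum_{j\ge0}b_jz^j$ satisfy $A(z)B(z)=1$ for $|z|\le1$. Fix $d\in(0,1/2)$. Assume that for every $\delta>0$ there exist constants $C_1,C_2$ (depending on $\delta$) such that $|a_j|\le C_1j^{-d-1+\delta}$ and $|b_j|\le C_2j^{d-1+\delta}$ for all $j\ge1$. *)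

theory Defs
  imports "HOL-Probability.Probability"
begin

definition L2_sums :: "'a measure \<Rightarrow> (nat \<Rightarrow> 'a \<Rightarrow> real) \<Rightarrow> ('a \<Rightarrow> real) \<Rightarrow> bool" where
  "L2_sums M f S \<longleftrightarrow>
     (\<forall>j. f j \<in> borel_measurable M \<and> integrable M (\<lambda>\<omega>. (f j \<omega>)\<^sup>2)) \<and>
     S \<in> borel_measurable M \<and> integrable M (\<lambda>\<omega>. (S \<omega>)\<^sup>2) \<and>
     ((\<lambda>N. integral\<^sup>L M (\<lambda>\<omega>. (S \<omega> - (\<Sum>j<N. f j \<omega>))\<^sup>2)) \<longlonglongrightarrow> 0)"

text \<open>The h-step truncated Wiener--Kolmogorov predictor of order k
  (meaningful for h >= 1; the value at h = 0 is an irrelevant placeholder 0).\<close>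
fun tWK_pred :: "(nat \<Rightarrow> real) \<Rightarrow> (int \<Rightarrow> 'a \<Rightarrow> real) \<Rightarrow> nat \<Rightarrow> nat \<Rightarrow> 'a \<Rightarrow> real" where
  "tWK_pred a X k h \<omega> =
     (if h = 0 then 0
      else - (\<Sum>j\<in>{1..<h}. a j * tWK_pred a X k (h - j) \<omega>)
           - (\<Sum>j\<in>{1..k}. a (h - 1 + j) * X (int k + 1 - int j) \<omega>))"

end

theory Submission
  imports Defs
begin



definition L2set :: "'a measure \<Rightarrow> ('a \<Rightarrow> real) set" where
  "L2set M = {f. f \<in> borel_measurable M \<and> integrable M (\<lambda>x. (f x)\<^sup>2)}"

lemma L2setI: "f \<in> borel_measurable M \<Longrightarrow> integrable M (\<lambda>x. (f x)\<^sup>2) \<Longrightarrow> f \<in> L2set M"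
  by (simp add: L2set_def)

lemma L2set_meas: "f \<in> L2set M \<Longrightarrow> f \<in> borel_measurable M" by (simp add: L2set_def)
lemma L2set_sq: "f \<in> L2set M \<Longrightarrow> integrable M (\<lambda>x. (f x)\<^sup>2)" by (simp add: L2set_def)

lemma L2_mult_int:
  assumes "f \<in> L2set M" "g \<in> L2set M"
  shows "integrable M (\<lambda>x. f x * g x)"
proof (rule Bochner_Integration.integrable_bound[where f="\<lambda>x. (f x)\<^sup>2 + (g x)\<^sup>2"])
  show "integrable M (\<lambda>x. (f x)\<^sup>2 + (g x)\<^sup>2)" using assms by (simp add: L2set_def)
  show "(\<lambda>x. f x * g x) \<in> borel_measurable M" using assms by (auto simp: L2set_def intro!: borel_measurable_times)
  show "AE x in M. norm (f x * g x) \<le> norm ((f x)\<^sup>2 + (g x)\<^sup>2)"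
  proof (rule AE_I2)
    fix x
    have e: "(\<bar>f x\<bar> - \<bar>g x\<bar>)\<^sup>2 = (f x)\<^sup>2 + (g x)\<^sup>2 - 2*(\<bar>f x\<bar> * \<bar>g x\<bar>)"
      by (simp add: power2_diff power2_abs mult.assoc)
    have "0 \<le> (\<bar>f x\<bar> - \<bar>g x\<bar>)\<^sup>2" by simp
    hence "2*(\<bar>f x\<bar> * \<bar>g x\<bar>) \<le> (f x)\<^sup>2 + (g x)\<^sup>2" using e by linarith
    moreover have "\<bar>f x\<bar> * \<bar>g x\<bar> \<ge> 0" by simp
    moreover have "\<bar>f x * g x\<bar> = \<bar>f x\<bar> * \<bar>g x\<bar>" by (rule abs_mult)
    ultimately have "\<bar>f x * g x\<bar> \<le> (f x)\<^sup>2 + (g x)\<^sup>2" by linarith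
    thus "norm (f x * g x) \<le> norm ((f x)\<^sup>2 + (g x)\<^sup>2)" by simp
  qed
qed

lemma L2_add: "f \<in> L2set M \<Longrightarrow> g \<in> L2set M \<Longrightarrow> (\<lambda>x. f x + g x) \<in> L2set M"
proof -
  assume f: "f \<in> L2set M" and g: "g \<in> L2set M"
  have "integrable M (\<lambda>x. (f x)\<^sup>2 + (g x)\<^sup>2 + 2 * (f x * g x))"
    using f g L2_mult_int[OF f g] by (simp add: L2set_def)
  moreover have "(\<lambda>x. (f x + g x)\<^sup>2) = (\<lambda>x. (f x)\<^sup>2 + (g x)\<^sup>2 + 2 * (f x * g x))"
    by (simp add: power2_eq_square algebra_simps)
  ultimately show ?thesis using f g by (auto simp: L2set_def)
qed

lemma L2_cmult: "f \<in> L2set M \<Longrightarrow> (\<lambda>x. c * f x) \<in> L2set M"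
  by (auto simp: L2set_def power_mult_distrib)

lemma L2_uminus: "f \<in> L2set M \<Longrightarrow> (\<lambda>x. - f x) \<in> L2set M"
  using L2_cmult[of f M "-1"] by simp

lemma L2_diff: "f \<in> L2set M \<Longrightarrow> g \<in> L2set M \<Longrightarrow> (\<lambda>x. f x - g x) \<in> L2set M"
  using L2_add[OF _ L2_uminus[of g]] by simp

lemma L2_zero: "(\<lambda>x. 0) \<in> L2set M" by (simp add: L2set_def)

lemma L2_sum: "(\<And>i. i \<in> I \<Longrightarrow> f i \<in> L2set M) \<Longrightarrow> (\<lambda>x. \<Sum>i\<in>I. f i x) \<in> L2set M"
proof (induction I rule: infinite_finite_induct)
  case (infinite A) then show ?case by (simp add: L2_zero)
next
  case empty then show ?case by (simp add: L2_zero)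
next
  case (insert i F)
  then show ?case by (simp add: L2_add)
qed

lemma abs_E_bound:
  assumes f: "f \<in> L2set M" and g: "g \<in> L2set M" and s: "s > 0"
  shows "\<bar>integral\<^sup>L M (\<lambda>x. f x * g x)\<bar> \<le> (s * integral\<^sup>L M (\<lambda>x. (f x)\<^sup>2) + integral\<^sup>L M (\<lambda>x. (g x)\<^sup>2) / s) / 2"
proof -
  have pw: "\<bar>f x * g x\<bar> \<le> (s * (f x)\<^sup>2 + (g x)\<^sup>2 / s) / 2" for x
  proof -
    have "0 \<le> (s * \<bar>f x\<bar> - \<bar>g x\<bar>)\<^sup>2" by simp
    hence "2 * s * (\<bar>f x\<bar> * \<bar>g x\<bar>) \<le> s * (s * (f x)\<^sup>2) + (g x)\<^sup>2"
      by (simp add: power2_eq_square algebra_simps)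
    hence "2 * s * (\<bar>f x\<bar> * \<bar>g x\<bar>) \<le> s * (s * (f x)\<^sup>2 + (g x)\<^sup>2 / s)"
      using s by (simp add: algebra_simps)
    hence "2 * (\<bar>f x\<bar> * \<bar>g x\<bar>) \<le> s * (f x)\<^sup>2 + (g x)\<^sup>2 / s"
      using s by (simp add: mult.assoc)
    thus ?thesis by (simp add: abs_mult)
  qed
  have "\<bar>integral\<^sup>L M (\<lambda>x. f x * g x)\<bar> \<le> integral\<^sup>L M (\<lambda>x. norm (f x * g x))"
    using integral_norm_bound[of M "\<lambda>x. f x * g x"] by simp
  also have "\<dots> \<le> integral\<^sup>L M (\<lambda>x. (s * (f x)\<^sup>2 + (g x)\<^sup>2 / s) / 2)"
    apply (rule integral_mono)
    using L2_mult_int[OF f g] f g pw by (auto simp: L2set_def)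
  also have "\<dots> = (s * integral\<^sup>L M (\<lambda>x. (f x)\<^sup>2) + integral\<^sup>L M (\<lambda>x. (g x)\<^sup>2) / s) / 2"
    using f g by (simp add: L2set_def)
  finally show ?thesis .
qed

lemma E_tendsto_zero:
  assumes f: "f \<in> L2set M" and g: "\<And>N. g N \<in> L2set M"
    and lim: "(\<lambda>N. integral\<^sup>L M (\<lambda>x. (g N x)\<^sup>2)) \<longlonglongrightarrow> 0"
  shows "(\<lambda>N. integral\<^sup>L M (\<lambda>x. f x * g N x)) \<longlonglongrightarrow> 0"
proof -
  define A where "A = integral\<^sup>L M (\<lambda>x. (f x)\<^sup>2)"
  define B where "B N = integral\<^sup>L M (\<lambda>x. (g N x)\<^sup>2)" for N
  have B0: "B N \<ge> 0" for N unfolding B_def by (rule integral_nonneg_AE) simp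
  define s where "s N = sqrt (B N) + 1 / (real N + 1)" for N
  have spos: "s N > 0" for N unfolding s_def using B0[of N] by (simp add: add_nonneg_pos)
  have bnd: "\<bar>integral\<^sup>L M (\<lambda>x. f x * g N x)\<bar> \<le> (s N * A + sqrt (B N)) / 2" for N
  proof -
    have q: "B N / s N \<le> sqrt (B N)"
    proof -
      have "B N = sqrt (B N) * sqrt (B N)" using B0[of N] by simp
      also have "\<dots> \<le> sqrt (B N) * s N" using B0[of N] unfolding s_def by (intro mult_left_mono) auto
      finally show ?thesis using spos[of N] by (simp add: divide_le_eq)
    qed
    have r: "\<bar>integral\<^sup>L M (\<lambda>x. f x * g N x)\<bar> \<le> (s N * A + B N / s N) / 2"
      unfolding A_def B_def by (rule abs_E_bound[OF f g[of N] spos[of N]])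
    have "(s N * A + B N / s N) / 2 \<le> (s N * A + sqrt (B N)) / 2"
      using q by (intro divide_right_mono add_left_mono) auto
    with r show ?thesis by (rule order_trans)
  qed
  have "(\<lambda>N. sqrt (B N)) \<longlonglongrightarrow> 0" using tendsto_real_sqrt[OF lim] unfolding B_def by simp
  moreover have "(\<lambda>N. 1 / (real N + 1)) \<longlonglongrightarrow> 0"
    using LIMSEQ_inverse_real_of_nat by (simp add: inverse_eq_divide add.commute)
  ultimately have "(\<lambda>N. (s N * A + sqrt (B N)) / 2) \<longlonglongrightarrow> ((0 + 0) * A + 0) / 2"
    unfolding s_def by (intro tendsto_intros) auto
  hence "(\<lambda>N. (s N * A + sqrt (B N)) / 2) \<longlonglongrightarrow> 0" by simp
  thus ?thesis
    by (rule Lim_null_comparison[rotated]) (use bnd in \<open>auto intro!: always_eventually\<close>)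
qed




lemma L2_sums_inner:
  assumes S: "L2_sums M f S" and Z: "Z \<in> L2set M"
  shows "(\<lambda>N. integral\<^sup>L M (\<lambda>x. Z x * (\<Sum>j<N. f j x))) \<longlonglongrightarrow> integral\<^sup>L M (\<lambda>x. Z x * S x)"
proof -
  have fL: "f j \<in> L2set M" for j using S by (simp add: L2_sums_def L2set_def)
  have SL: "S \<in> L2set M" using S by (simp add: L2_sums_def L2set_def)
  define g where "g N x = S x - (\<Sum>j<N. f j x)" for N x
  have gL: "g N \<in> L2set M" for N unfolding g_def by (intro L2_diff SL L2_sum fL)
  have "(\<lambda>N. integral\<^sup>L M (\<lambda>x. (g N x)\<^sup>2)) \<longlonglongrightarrow> 0"
    using S unfolding L2_sums_def g_def by simp
  from E_tendsto_zero[OF Z gL this]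
  have lim: "(\<lambda>N. integral\<^sup>L M (\<lambda>x. Z x * g N x)) \<longlonglongrightarrow> 0" .
  have eq: "integral\<^sup>L M (\<lambda>x. Z x * (\<Sum>j<N. f j x)) = integral\<^sup>L M (\<lambda>x. Z x * S x) - integral\<^sup>L M (\<lambda>x. Z x * g N x)" for N
  proof -
    have i1: "integrable M (\<lambda>x. Z x * S x)" by (rule L2_mult_int[OF Z SL])
    have i2: "integrable M (\<lambda>x. Z x * g N x)" by (rule L2_mult_int[OF Z gL])
    have "(\<lambda>x. Z x * (\<Sum>j<N. f j x)) = (\<lambda>x. Z x * S x - Z x * g N x)"
      unfolding g_def by (simp add: algebra_simps)
    thus ?thesis using i1 i2 by simp
  qed
  show ?thesis unfolding eq using tendsto_diff[OF tendsto_const lim] by simp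
qed

lemma E_lincomb:
  assumes Z: "Z \<in> L2set M" and W: "\<And>j. j \<in> I \<Longrightarrow> W j \<in> L2set M"
  shows "integral\<^sup>L M (\<lambda>x. Z x * (\<Sum>j\<in>I. c j * W j x)) = (\<Sum>j\<in>I. c j * integral\<^sup>L M (\<lambda>x. Z x * W j x))"
proof -
  have "(\<lambda>x. Z x * (\<Sum>j\<in>I. c j * W j x)) = (\<lambda>x. \<Sum>j\<in>I. c j * (Z x * W j x))"
    by (simp add: sum_distrib_left algebra_simps)
  moreover have "integrable M (\<lambda>x. c j * (Z x * W j x))" if "j \<in> I" for j
    using L2_mult_int[OF Z W[OF that]] by simp
  ultimately show ?thesis by (simp add: integral_sum)
qed

locale tsa =
  fixes M :: "'w measure" and X eps :: "int \<Rightarrow> 'w \<Rightarrow> real" and a b :: "nat \<Rightarrow> real" and s2 :: real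
  assumes X_meas: "\<And>n. X n \<in> borel_measurable M"
    and X_L2: "\<And>n. integrable M (\<lambda>\<omega>. (X n \<omega>)\<^sup>2)"
    and eps_meas: "\<And>n. eps n \<in> borel_measurable M"
    and eps_L2: "\<And>n. integrable M (\<lambda>\<omega>. (eps n \<omega>)\<^sup>2)"
    and eps_cov: "\<And>n m. integral\<^sup>L M (\<lambda>\<omega>. eps n \<omega> * eps m \<omega>) = (if n = m then s2 else 0)"
    and s2_pos: "s2 > 0"
    and MA: "\<And>n. L2_sums M (\<lambda>j \<omega>. b j * eps (n - int j) \<omega>) (X n)"
    and AR: "\<And>n. L2_sums M (\<lambda>j \<omega>. a j * X (n - int j) \<omega>) (eps n)"
    and a0: "a 0 = 1" and b0: "b 0 = 1"
begin

lemma XL2: "X n \<in> L2set M" using X_meas X_L2 by (simp add: L2set_def)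
lemma epsL2: "eps n \<in> L2set M" using eps_meas eps_L2 by (simp add: L2set_def)

lemma eps_X: "integral\<^sup>L M (\<lambda>\<omega>. eps n \<omega> * X t \<omega>) = (if n \<le> t then s2 * b (nat (t - n)) else 0)"
proof -
  have lim: "(\<lambda>N. integral\<^sup>L M (\<lambda>x. eps n x * (\<Sum>j<N. b j * eps (t - int j) x))) \<longlonglongrightarrow> integral\<^sup>L M (\<lambda>x. eps n x * X t x)"
    by (rule L2_sums_inner[OF MA epsL2])
  have seq: "integral\<^sup>L M (\<lambda>x. eps n x * (\<Sum>j<N. b j * eps (t - int j) x)) = (\<Sum>j<N. b j * (if n = t - int j then s2 else 0))" for N
    using E_lincomb[where Z="eps n" and W="\<lambda>j. eps (t - int j)" and I="{..<N}" and c=b] epsL2 by (simp add: eps_cov)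
  have ev: "eventually (\<lambda>N. integral\<^sup>L M (\<lambda>x. eps n x * (\<Sum>j<N. b j * eps (t - int j) x)) = (if n \<le> t then s2 * b (nat (t - n)) else 0)) sequentially"
  proof (rule eventually_sequentiallyI[of "Suc (nat (t - n))"])
    fix N assume N: "Suc (nat (t - n)) \<le> N"
    show "integral\<^sup>L M (\<lambda>x. eps n x * (\<Sum>j<N. b j * eps (t - int j) x)) = (if n \<le> t then s2 * b (nat (t - n)) else 0)"
    proof (cases "n \<le> t")
      case True
      have e: "(\<lambda>j. b j * (if n = t - int j then s2 else 0)) = (\<lambda>j. if j = nat (t - n) then b j * s2 else 0)"
        using True by (auto simp: fun_eq_iff)
      have "(\<Sum>j<N. b j * (if n = t - int j then s2 else 0)) = (\<Sum>j<N. if j = nat (t - n) then b j * s2 else 0)"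
        by (simp only: e)
      also have "\<dots> = b (nat (t - n)) * s2" using N by (subst sum.delta) auto
      finally show ?thesis unfolding seq using True by simp
    next
      case False
      have "(\<lambda>j. b j * (if n = t - int j then s2 else 0)) = (\<lambda>j. 0)"
        using False by (auto simp: fun_eq_iff)
      then show ?thesis unfolding seq using False by simp
    qed
  qed
  have "(\<lambda>N. integral\<^sup>L M (\<lambda>x. eps n x * (\<Sum>j<N. b j * eps (t - int j) x))) \<longlonglongrightarrow> (if n \<le> t then s2 * b (nat (t - n)) else 0)"
    by (rule tendsto_eventually[OF ev])
  from LIMSEQ_unique[OF lim this] show ?thesis by simp
qed

lemma coef: "(\<Sum>j\<le>p. a j * b (p - j)) = (if p = 0 then 1 else 0)"
proof -
  have lim: "(\<lambda>N. integral\<^sup>L M (\<lambda>x. eps 0 x * (\<Sum>j<N. a j * X (int p - int j) x))) \<longlonglongrightarrow> integral\<^sup>L M (\<lambda>x. eps 0 x * eps (int p) x)"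
    by (rule L2_sums_inner[OF AR epsL2])
  have seq: "integral\<^sup>L M (\<lambda>x. eps 0 x * (\<Sum>j<N. a j * X (int p - int j) x)) = (\<Sum>j<N. a j * (if j \<le> p then s2 * b (p - j) else 0))" for N
  proof -
    have "integral\<^sup>L M (\<lambda>x. eps 0 x * (\<Sum>j<N. a j * X (int p - int j) x)) = (\<Sum>j<N. a j * integral\<^sup>L M (\<lambda>x. eps 0 x * X (int p - int j) x))"
      using E_lincomb[where Z="eps 0" and W="\<lambda>j. X (int p - int j)" and I="{..<N}" and c=a] epsL2 XL2 by simp
    also have "\<dots> = (\<Sum>j<N. a j * (if j \<le> p then s2 * b (p - j) else 0))"
      by (intro sum.cong refl) (simp add: eps_X nat_diff_distrib)
    finally show ?thesis .
  qed
  have ev: "eventually (\<lambda>N. integral\<^sup>L M (\<lambda>x. eps 0 x * (\<Sum>j<N. a j * X (int p - int j) x)) = s2 * (\<Sum>j\<le>p. a j * b (p - j))) sequentially"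
  proof (rule eventually_sequentiallyI[of "Suc p"])
    fix N assume N: "Suc p \<le> N"
    have "(\<Sum>j<N. a j * (if j \<le> p then s2 * b (p - j) else 0)) = (\<Sum>j<N. if j \<le> p then a j * (s2 * b (p - j)) else 0)"
      by (intro sum.cong) auto
    also have "\<dots> = (\<Sum>j\<in>{j\<in>{..<N}. j \<le> p}. a j * (s2 * b (p - j)))"
      by (rule sum.inter_filter[symmetric]) simp
    also have "{j\<in>{..<N}. j \<le> p} = {..p}" using N by auto
    finally show "integral\<^sup>L M (\<lambda>x. eps 0 x * (\<Sum>j<N. a j * X (int p - int j) x)) = s2 * (\<Sum>j\<le>p. a j * b (p - j))"
      unfolding seq by (simp add: sum_distrib_left algebra_simps)
  qed
  from LIMSEQ_unique[OF lim tendsto_eventually[OF ev]]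
  have "s2 * (\<Sum>j\<le>p. a j * b (p - j)) = (if p = 0 then s2 else 0)" by (simp add: eps_cov)
  thus ?thesis using s2_pos by (cases "p = 0") auto
qed

end



lemma conv_sum:
  fixes a b U :: "nat \<Rightarrow> real"
  assumes coef: "\<And>p. (\<Sum>j\<le>p. a j * b (p - j)) = (if p = 0 then 1 else 0)" and h: "h \<ge> 1"
  shows "(\<Sum>j<h. a j * (\<Sum>m<h - j. b m * U (h - j - m))) = U h"
proof -
  have "(\<Sum>j<h. a j * (\<Sum>m<h - j. b m * U (h - j - m))) = (\<Sum>j<h. \<Sum>m<h - j. a j * (b m * U (h - j - m)))"
    by (simp add: sum_distrib_left)
  also have "\<dots> = (\<Sum>(j,m)\<in>(SIGMA j:{..<h}. {..<h - j}). a j * (b m * U (h - j - m)))"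
    by (rule sum.Sigma) auto
  also have "(SIGMA j:{..<h}. {..<h - j}) = {(j,m). j + m < h}" by auto
  also have "(\<Sum>(j,m)\<in>{(j,m). j + m < h}. a j * (b m * U (h - j - m))) = (\<Sum>k<h. \<Sum>i\<le>k. a i * (b (k - i) * U (h - i - (k - i))))"
    by (rule sum.triangle_reindex)
  also have "\<dots> = (\<Sum>k<h. (\<Sum>i\<le>k. a i * b (k - i)) * U (h - k))"
    by (intro sum.cong refl) (auto simp: sum_distrib_right mult.assoc intro!: sum.cong)
  also have "\<dots> = (\<Sum>k<h. if k = 0 then U (h - k) else 0)" by (intro sum.cong refl) (simp add: coef)
  also have "\<dots> = U h" using h by (subst sum.delta) auto
  finally show ?thesis .
qed

lemma conv_inv:
  fixes a b U Y :: "nat \<Rightarrow> real"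
  assumes coef: "\<And>p. (\<Sum>j\<le>p. a j * b (p - j)) = (if p = 0 then 1 else 0)" and a0: "a 0 = 1"
    and rec: "\<And>h. h \<ge> 1 \<Longrightarrow> (\<Sum>j<h. a j * Y (h - j)) = U h"
  shows "h \<ge> 1 \<Longrightarrow> Y h = (\<Sum>m<h. b m * U (h - m))"
proof (induction h rule: less_induct)
  case (less h)
  define Z where "Z h = (\<Sum>m<h. b m * U (h - m))" for h
  have convZ: "(\<Sum>j<h. a j * Z (h - j)) = U h" unfolding Z_def using conv_sum[OF coef less.prems] by (simp add: diff_diff_add)
  obtain n where hn: "h = Suc n" using less.prems by (cases h) auto
  have IH: "Y (h - Suc i) = Z (h - Suc i)" if "i < n" for i
    unfolding Z_def by (rule less.IH) (use that hn in auto)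
  have "Y h + (\<Sum>i<n. a (Suc i) * Y (h - Suc i)) = U h"
    using rec[OF less.prems, unfolded hn sum.lessThan_Suc_shift] hn by (simp add: a0)
  moreover have "Z h + (\<Sum>i<n. a (Suc i) * Z (h - Suc i)) = U h"
    using convZ[unfolded hn sum.lessThan_Suc_shift] hn by (simp add: a0)
  moreover have "(\<Sum>i<n. a (Suc i) * Y (h - Suc i)) = (\<Sum>i<n. a (Suc i) * Z (h - Suc i))"
    using IH by (intro sum.cong) auto
  ultimately show ?case unfolding Z_def by simp
qed

lemma L2_null_sum:
  assumes "finite I" and "\<And>i N. i \<in> I \<Longrightarrow> g i N \<in> L2set M"
    and "\<And>i. i \<in> I \<Longrightarrow> (\<lambda>N. integral\<^sup>L M (\<lambda>x. (g i N x)\<^sup>2)) \<longlonglongrightarrow> 0"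
  shows "(\<lambda>N. integral\<^sup>L M (\<lambda>x. (\<Sum>i\<in>I. g i N x)\<^sup>2)) \<longlonglongrightarrow> 0"
  using assms
proof (induction I rule: finite_induct)
  case empty then show ?case by simp
next
  case (insert i F)
  define u where "u N x = g i N x" for N x
  define v where "v N x = (\<Sum>i\<in>F. g i N x)" for N x
  have uL: "u N \<in> L2set M" for N unfolding u_def using insert by auto
  have vL: "v N \<in> L2set M" for N unfolding v_def using insert by (intro L2_sum) auto
  have limu: "(\<lambda>N. integral\<^sup>L M (\<lambda>x. (u N x)\<^sup>2)) \<longlonglongrightarrow> 0" unfolding u_def using insert by auto
  have limv: "(\<lambda>N. integral\<^sup>L M (\<lambda>x. (v N x)\<^sup>2)) \<longlonglongrightarrow> 0" unfolding v_def using insert by auto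
  have bnd: "integral\<^sup>L M (\<lambda>x. (u N x + v N x)\<^sup>2) \<le> 2 * integral\<^sup>L M (\<lambda>x. (u N x)\<^sup>2) + 2 * integral\<^sup>L M (\<lambda>x. (v N x)\<^sup>2)" for N
  proof -
    have "integral\<^sup>L M (\<lambda>x. (u N x + v N x)\<^sup>2) \<le> integral\<^sup>L M (\<lambda>x. 2 * (u N x)\<^sup>2 + 2 * (v N x)\<^sup>2)"
    proof (rule integral_mono)
      show "integrable M (\<lambda>x. (u N x + v N x)\<^sup>2)" using L2_add[OF uL vL] by (simp add: L2set_def)
      show "integrable M (\<lambda>x. 2 * (u N x)\<^sup>2 + 2 * (v N x)\<^sup>2)" using uL vL by (simp add: L2set_def)
      fix x
      have "0 \<le> (u N x - v N x)\<^sup>2" by simp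
      thus "(u N x + v N x)\<^sup>2 \<le> 2 * (u N x)\<^sup>2 + 2 * (v N x)\<^sup>2"
        by (simp add: power2_eq_square algebra_simps)
    qed
    also have "\<dots> = 2 * integral\<^sup>L M (\<lambda>x. (u N x)\<^sup>2) + 2 * integral\<^sup>L M (\<lambda>x. (v N x)\<^sup>2)"
      using uL vL by (simp add: L2set_def)
    finally show ?thesis .
  qed
  have "(\<lambda>N. 2 * integral\<^sup>L M (\<lambda>x. (u N x)\<^sup>2) + 2 * integral\<^sup>L M (\<lambda>x. (v N x)\<^sup>2)) \<longlonglongrightarrow> 2 * 0 + 2 * 0"
    by (intro tendsto_intros limu limv)
  hence l2: "(\<lambda>N. 2 * integral\<^sup>L M (\<lambda>x. (u N x)\<^sup>2) + 2 * integral\<^sup>L M (\<lambda>x. (v N x)\<^sup>2)) \<longlonglongrightarrow> 0" by simp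
  have "(\<lambda>N. integral\<^sup>L M (\<lambda>x. (u N x + v N x)\<^sup>2)) \<longlonglongrightarrow> 0"
  proof (rule Lim_null_comparison[OF _ l2])
    show "\<forall>\<^sub>F N in sequentially. norm (integral\<^sup>L M (\<lambda>x. (u N x + v N x)\<^sup>2)) \<le> 2 * integral\<^sup>L M (\<lambda>x. (u N x)\<^sup>2) + 2 * integral\<^sup>L M (\<lambda>x. (v N x)\<^sup>2)"
      using bnd by (intro always_eventually allI) (simp add: integral_nonneg_AE)
  qed
  thus ?case using insert unfolding u_def v_def by simp
qed

context tsa begin

lemma eps_T:
  assumes n: "1 \<le> n"
  shows "integral\<^sup>L M (\<lambda>\<omega>. eps n \<omega> * (eps (int N) \<omega> - (\<Sum>j<N. a j * X (int N - int j) \<omega>))) = 0"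
proof -
  have int1: "integrable M (\<lambda>\<omega>. eps n \<omega> * eps (int N) \<omega>)" by (rule L2_mult_int[OF epsL2 epsL2])
  have int2: "integrable M (\<lambda>\<omega>. eps n \<omega> * (\<Sum>j<N. a j * X (int N - int j) \<omega>))"
    by (rule L2_mult_int[OF epsL2]) (intro L2_sum L2_cmult XL2)
  have "integral\<^sup>L M (\<lambda>\<omega>. eps n \<omega> * (eps (int N) \<omega> - (\<Sum>j<N. a j * X (int N - int j) \<omega>)))
      = integral\<^sup>L M (\<lambda>\<omega>. eps n \<omega> * eps (int N) \<omega>) - integral\<^sup>L M (\<lambda>\<omega>. eps n \<omega> * (\<Sum>j<N. a j * X (int N - int j) \<omega>))"
    using int1 int2 by (simp add: right_diff_distrib)
  also have "integral\<^sup>L M (\<lambda>\<omega>. eps n \<omega> * (\<Sum>j<N. a j * X (int N - int j) \<omega>)) = (\<Sum>j<N. a j * (if n \<le> int N - int j then s2 * b (nat (int N - int j - n)) else 0))"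
    using E_lincomb[where Z="eps n" and W="\<lambda>j. X (int N - int j)" and I="{..<N}" and c=a] epsL2 XL2 by (simp add: eps_X)
  finally have E: "integral\<^sup>L M (\<lambda>\<omega>. eps n \<omega> * (eps (int N) \<omega> - (\<Sum>j<N. a j * X (int N - int j) \<omega>)))
      = (if n = int N then s2 else 0) - (\<Sum>j<N. a j * (if n \<le> int N - int j then s2 * b (nat (int N - int j - n)) else 0))"
    by (simp add: eps_cov)
  show ?thesis
  proof (cases "n \<le> int N")
    case False
    hence "(\<Sum>j<N. a j * (if n \<le> int N - int j then s2 * b (nat (int N - int j - n)) else 0)) = 0"
      by (intro sum.neutral) auto
    with False E show ?thesis by simp
  next
    case True
    define q where "q = nat (int N - n)"
    have qN: "q < N" and qN': "int q = int N - n" using n True unfolding q_def by auto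
    have "(\<Sum>j<N. a j * (if n \<le> int N - int j then s2 * b (nat (int N - int j - n)) else 0))
        = (\<Sum>j<N. if j \<le> q then s2 * (a j * b (q - j)) else 0)"
    proof (intro sum.cong refl)
      fix j assume "j \<in> {..<N}"
      show "a j * (if n \<le> int N - int j then s2 * b (nat (int N - int j - n)) else 0) = (if j \<le> q then s2 * (a j * b (q - j)) else 0)"
      proof (cases "j \<le> q")
        case True
        hence "nat (int N - int j - n) = q - j" using qN' by linarith
        then show ?thesis using True qN' by auto
      qed (use qN' in auto)
    qed
    also have "\<dots> = (\<Sum>j\<in>{j\<in>{..<N}. j \<le> q}. s2 * (a j * b (q - j)))"
      by (rule sum.inter_filter[symmetric]) simp
    also have "{j\<in>{..<N}. j \<le> q} = {..q}" using qN by auto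
    also have "(\<Sum>j\<le>q. s2 * (a j * b (q - j))) = s2 * (if q = 0 then 1 else 0)"
      by (simp add: sum_distrib_left[symmetric] coef)
    finally show ?thesis using E qN' by auto
  qed
qed

end



lemma pred_rec:
  fixes a :: "nat \<Rightarrow> real"
  assumes a0: "a 0 = 1" and h: "h \<ge> 1"
  shows "(\<Sum>j<h. a j * (X (int k + int (h - j)) \<omega> - tWK_pred a X k (h - j) \<omega>))
         = (\<Sum>j<k+h. a j * X (int k + int h - int j) \<omega>)"
proof -
  let ?P = "\<lambda>h. tWK_pred a X k h \<omega>"
  have P: "?P h = - (\<Sum>j\<in>{1..<h}. a j * ?P (h - j)) - (\<Sum>j\<in>{1..k}. a (h - 1 + j) * X (int k + 1 - int j) \<omega>)"
    using h by (subst tWK_pred.simps) simp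
  have s1: "(\<Sum>j<h. a j * ?P (h - j)) = ?P h + (\<Sum>j\<in>{1..<h}. a j * ?P (h - j))"
    using h by (simp add: atLeast0LessThan[symmetric] sum.atLeast_Suc_lessThan a0)
  have s2: "(\<Sum>j<h. a j * X (int k + int (h - j)) \<omega>) = (\<Sum>j<h. a j * X (int k + int h - int j) \<omega>)"
    by (intro sum.cong refl) (auto simp: of_nat_diff add_diff_eq)
  have s3: "(\<Sum>j<k+h. a j * X (int k + int h - int j) \<omega>) = (\<Sum>j<h. a j * X (int k + int h - int j) \<omega>) + (\<Sum>j\<in>{h..<k+h}. a j * X (int k + int h - int j) \<omega>)"
    by (simp add: atLeast0LessThan[symmetric] sum.atLeastLessThan_concat)
  have s4: "(\<Sum>j\<in>{h..<k+h}. a j * X (int k + int h - int j) \<omega>) = (\<Sum>j\<in>{1..k}. a (h - 1 + j) * X (int k + 1 - int j) \<omega>)"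
  proof -
    have "{h..<k+h} = {1 + (h - 1)..<(k + 1) + (h - 1)}" using h by auto
    hence "(\<Sum>j\<in>{h..<k+h}. a j * X (int k + int h - int j) \<omega>) = (\<Sum>i\<in>{1..<k+1}. a (i + (h - 1)) * X (int k + int h - int (i + (h - 1))) \<omega>)"
      by (simp only: sum.shift_bounds_nat_ivl)
    also have "\<dots> = (\<Sum>j\<in>{1..k}. a (h - 1 + j) * X (int k + 1 - int j) \<omega>)"
    proof -
      have "{1..<k+1} = {1..k}" by auto
      moreover have "a (i + (h - 1)) * X (int k + int h - int (i + (h - 1))) \<omega> = a (h - 1 + i) * X (int k + 1 - int i) \<omega>" for i
      proof -
        have "int k + int h - int (i + (h - 1)) = int k + 1 - int i" using h by (simp add: of_nat_diff)
        thus ?thesis by (metis add.commute)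
      qed
      ultimately show ?thesis by simp
    qed
    finally show ?thesis .
  qed
  have "(\<Sum>j<h. a j * (X (int k + int (h - j)) \<omega> - ?P (h - j)))
        = (\<Sum>j<h. a j * X (int k + int (h - j)) \<omega>) - (\<Sum>j<h. a j * ?P (h - j))"
    by (simp add: right_diff_distrib sum_subtractf)
  also have "\<dots> = (\<Sum>j<k+h. a j * X (int k + int h - int j) \<omega>)"
    unfolding s1 s2 s3 s4 using P by simp
  finally show ?thesis .
qed



declare tWK_pred.simps[simp del]

theorem mainTheorem7:
  fixes M :: "'w measure"
    and X eps :: "int \<Rightarrow> 'w \<Rightarrow> real"
    and a b :: "nat \<Rightarrow> real"
    and \<sigma> :: "int \<Rightarrow> real"
    and \<sigma>\<epsilon> d :: real
    and k h :: nat
  assumes prob: "prob_space M"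
    and X_meas: "\<And>n. X n \<in> borel_measurable M"
    and X_L2: "\<And>n. integrable M (\<lambda>\<omega>. (X n \<omega>)\<^sup>2)"
    and X_mean: "\<And>n. integral\<^sup>L M (X n) = 0"
    and X_cov: "\<And>n j. integral\<^sup>L M (\<lambda>\<omega>. X n \<omega> * X (n + j) \<omega>) = \<sigma> j"
    and \<sigma>_not_abs_summable: "\<not> ((\<lambda>j. \<bar>\<sigma> j\<bar>) summable_on UNIV)"
    and eps_meas: "\<And>n. eps n \<in> borel_measurable M"
    and eps_L2: "\<And>n. integrable M (\<lambda>\<omega>. (eps n \<omega>)\<^sup>2)"
    and eps_mean: "\<And>n. integral\<^sup>L M (eps n) = 0"
    and eps_cov: "\<And>n m. integral\<^sup>L M (\<lambda>\<omega>. eps n \<omega> * eps m \<omega>) = (if n = m then \<sigma>\<epsilon>\<^sup>2 else 0)"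
    and \<sigma>\<epsilon>_pos: "\<sigma>\<epsilon>\<^sup>2 > 0"
    and MA: "\<And>n. L2_sums M (\<lambda>j \<omega>. b j * eps (n - int j) \<omega>) (X n)"
    and b0: "b 0 = 1"
    and b_sq: "summable (\<lambda>j. (b j)\<^sup>2)"
    and AR: "\<And>n. L2_sums M (\<lambda>j \<omega>. a j * X (n - int j) \<omega>) (eps n)"
    and a0: "a 0 = 1"
    and a_abs: "summable (\<lambda>j. \<bar>a j\<bar>)"
    and AB: "\<And>z::complex. norm z \<le> 1 \<Longrightarrow> summable (\<lambda>j. complex_of_real (b j) * z ^ j) \<Longrightarrow>
               (\<Sum>j. complex_of_real (a j) * z ^ j) * (\<Sum>j. complex_of_real (b j) * z ^ j) = 1"
    and d: "0 < d" "d < 1/2"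
    and decay: "\<And>\<delta>. \<delta> > 0 \<Longrightarrow> \<exists>C1 C2. \<forall>j\<ge>1.
               \<bar>a j\<bar> \<le> C1 * real j powr (- d - 1 + \<delta>) \<and> \<bar>b j\<bar> \<le> C2 * real j powr (d - 1 + \<delta>)"
    and k: "k \<ge> 1"
    and h: "h \<ge> 1"
  shows "\<exists>R. L2_sums M
              (\<lambda>i \<omega>. (\<Sum>m<h. a (i + k + 1 + h - 1 - m) * b m) * X (int k + 1 - int (i + k + 1)) \<omega>) R
           \<and> (AE \<omega> in M. X (int k + int h) \<omega> - tWK_pred a X k h \<omega>
                = (\<Sum>l<h. b l * eps (int k + int h - int l) \<omega>) - R \<omega>)
           \<and> integral\<^sup>L M (\<lambda>\<omega>. (tWK_pred a X k h \<omega> - X (int k + int h) \<omega>)\<^sup>2)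
                = \<sigma>\<epsilon>\<^sup>2 * (\<Sum>l<h. (b l)\<^sup>2) + integral\<^sup>L M (\<lambda>\<omega>. (R \<omega>)\<^sup>2)"
proof -
  interpret tsa M X eps a b "\<sigma>\<epsilon>\<^sup>2"
    using X_meas X_L2 eps_meas eps_L2 eps_cov \<sigma>\<epsilon>_pos MA AR a0 b0 by unfold_locales auto
  define U where "U p \<omega> = (\<Sum>j<k+p. a j * X (int k + int p - int j) \<omega>)" for p \<omega>
  define T where "T p \<omega> = eps (int k + int p) \<omega> - U p \<omega>" for p \<omega>
  define R where "R \<omega> = (\<Sum>m<h. b m * T (h - m) \<omega>)" for \<omega>
  define S where "S \<omega> = (\<Sum>l<h. b l * eps (int k + int h - int l) \<omega>)" for \<omega>
  define c where "c i = (\<Sum>m<h. a (i + k + 1 + h - 1 - m) * b m)" for i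
  have UL: "U p \<in> L2set M" for p unfolding U_def by (intro L2_sum L2_cmult XL2)
  have TL: "T p \<in> L2set M" for p unfolding T_def by (intro L2_diff epsL2 UL)
  have RL: "R \<in> L2set M" unfolding R_def by (intro L2_sum L2_cmult TL)
  have SL: "S \<in> L2set M" unfolding S_def by (intro L2_sum L2_cmult epsL2)
  have pw: "X (int k + int h) \<omega> - tWK_pred a X k h \<omega> = S \<omega> - R \<omega>" for \<omega>
  proof -
    have "X (int k + int h) \<omega> - tWK_pred a X k h \<omega> = (\<Sum>m<h. b m * U (h - m) \<omega>)"
      by (rule conv_inv[OF coef a0 _ h, where Y="\<lambda>h. X (int k + int h) \<omega> - tWK_pred a X k h \<omega>"])
         (unfold U_def, rule pred_rec[where a=a, OF a0])
    also have "\<dots> = S \<omega> - R \<omega>"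
      unfolding S_def R_def T_def sum_subtractf[symmetric]
      by (intro sum.cong refl) (simp add: algebra_simps of_nat_diff)
    finally show ?thesis .
  qed
  have sums: "L2_sums M (\<lambda>i \<omega>. (\<Sum>m<h. a (i + k + 1 + h - 1 - m) * b m) * X (int k + 1 - int (i + k + 1)) \<omega>) R"
    unfolding L2_sums_def
  proof (intro conjI allI)
    fix i
    show "(\<lambda>\<omega>. (\<Sum>m<h. a (i + k + 1 + h - 1 - m) * b m) * X (int k + 1 - int (i + k + 1)) \<omega>) \<in> borel_measurable M"
      using L2_cmult[OF XL2] by (simp add: L2set_def)
    show "integrable M (\<lambda>\<omega>. ((\<Sum>m<h. a (i + k + 1 + h - 1 - m) * b m) * X (int k + 1 - int (i + k + 1)) \<omega>)\<^sup>2)"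
      using L2_cmult[OF XL2] by (simp add: L2set_def)
  next
    show "R \<in> borel_measurable M" "integrable M (\<lambda>\<omega>. (R \<omega>)\<^sup>2)" using RL by (simp_all add: L2set_def)
  next
    define D where "D m N \<omega> = eps (int (k + (h - m))) \<omega> - (\<Sum>j<k + (h - m) + N. a j * X (int (k + (h - m)) - int j) \<omega>)" for m N \<omega>
    have DL: "D m N \<in> L2set M" for m N unfolding D_def by (intro L2_diff epsL2 L2_sum L2_cmult XL2)
    have Dlim: "(\<lambda>N. integral\<^sup>L M (\<lambda>\<omega>. (D m N \<omega>)\<^sup>2)) \<longlonglongrightarrow> 0" for m
    proof -
      have "(\<lambda>N. integral\<^sup>L M (\<lambda>\<omega>. (eps (int (k + (h - m))) \<omega> - (\<Sum>j<N. a j * X (int (k + (h - m)) - int j) \<omega>))\<^sup>2)) \<longlonglongrightarrow> 0"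
        using AR[of "int (k + (h - m))"] by (simp add: L2_sums_def)
      from LIMSEQ_ignore_initial_segment[OF this, of "k + (h - m)"]
      show ?thesis unfolding D_def by (simp add: add.commute)
    qed
    have decomp: "R \<omega> - (\<Sum>i<N. (\<Sum>m<h. a (i + k + 1 + h - 1 - m) * b m) * X (int k + 1 - int (i + k + 1)) \<omega>)
        = (\<Sum>m<h. b m * D m N \<omega>)" for N \<omega>
    proof -
      have A: "(\<Sum>i<N. (\<Sum>m<h. a (i + k + 1 + h - 1 - m) * b m) * X (int k + 1 - int (i + k + 1)) \<omega>)
          = (\<Sum>m<h. b m * (\<Sum>i<N. a (k + (h - m) + i) * X (- int i) \<omega>))"
      proof -
        have "(\<Sum>i<N. (\<Sum>m<h. a (i + k + 1 + h - 1 - m) * b m) * X (int k + 1 - int (i + k + 1)) \<omega>)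
            = (\<Sum>i<N. \<Sum>m<h. b m * (a (k + (h - m) + i) * X (- int i) \<omega>))"
          unfolding sum_distrib_right
          by (intro sum.cong refl) (auto simp: algebra_simps)
        also have "\<dots> = (\<Sum>m<h. b m * (\<Sum>i<N. a (k + (h - m) + i) * X (- int i) \<omega>))"
          by (subst sum.swap) (simp add: sum_distrib_left)
        finally show ?thesis .
      qed
      have B: "T (h - m) \<omega> - (\<Sum>i<N. a (k + (h - m) + i) * X (- int i) \<omega>) = D m N \<omega>" if "m < h" for m
      proof -
        let ?n = "k + (h - m)"
        have "(\<Sum>j<?n + N. a j * X (int ?n - int j) \<omega>) = (\<Sum>j<?n. a j * X (int ?n - int j) \<omega>) + (\<Sum>j\<in>{?n..<?n + N}. a j * X (int ?n - int j) \<omega>)"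
          by (simp add: atLeast0LessThan[symmetric] sum.atLeastLessThan_concat)
        also have "(\<Sum>j\<in>{?n..<?n + N}. a j * X (int ?n - int j) \<omega>) = (\<Sum>i<N. a (?n + i) * X (- int i) \<omega>)"
        proof -
          have "(\<Sum>j\<in>{0 + ?n..<N + ?n}. a j * X (int ?n - int j) \<omega>) = (\<Sum>i\<in>{0..<N}. a (i + ?n) * X (int ?n - int (i + ?n)) \<omega>)"
            by (rule sum.shift_bounds_nat_ivl)
          thus ?thesis by (simp add: atLeast0LessThan add.commute)
        qed
        finally have "(\<Sum>j<?n + N. a j * X (int ?n - int j) \<omega>) = (\<Sum>j<?n. a j * X (int ?n - int j) \<omega>) + (\<Sum>i<N. a (?n + i) * X (- int i) \<omega>)" .
        moreover have "U (h - m) \<omega> = (\<Sum>j<?n. a j * X (int ?n - int j) \<omega>)" unfolding U_def by simp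
        ultimately show ?thesis unfolding T_def D_def by (simp add: algebra_simps)
      qed
      show ?thesis unfolding A R_def sum_subtractf[symmetric] right_diff_distrib[symmetric]
        using B by (intro sum.cong refl) auto
    qed
    have "(\<lambda>N. integral\<^sup>L M (\<lambda>\<omega>. (\<Sum>m<h. b m * D m N \<omega>)\<^sup>2)) \<longlonglongrightarrow> 0"
    proof (rule L2_null_sum)
      show "(\<lambda>\<omega>. b m * D m N \<omega>) \<in> L2set M" for m N by (intro L2_cmult DL)
      show "(\<lambda>N. integral\<^sup>L M (\<lambda>\<omega>. (b m * D m N \<omega>)\<^sup>2)) \<longlonglongrightarrow> 0" for m
        using tendsto_mult[OF tendsto_const[of "(b m)\<^sup>2"] Dlim[of m]] by (simp add: power_mult_distrib)
    qed simp
    thus "(\<lambda>N. integral\<^sup>L M (\<lambda>\<omega>. (R \<omega> - (\<Sum>j<N. (\<Sum>m<h. a (j + k + 1 + h - 1 - m) * b m) * X (int k + 1 - int (j + k + 1)) \<omega>))\<^sup>2)) \<longlonglongrightarrow> 0"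
      unfolding decomp .
  qed
  have var: "integral\<^sup>L M (\<lambda>\<omega>. (tWK_pred a X k h \<omega> - X (int k + int h) \<omega>)\<^sup>2)
                = \<sigma>\<epsilon>\<^sup>2 * (\<Sum>l<h. (b l)\<^sup>2) + integral\<^sup>L M (\<lambda>\<omega>. (R \<omega>)\<^sup>2)"
  proof -
    have ET: "integral\<^sup>L M (\<lambda>\<omega>. eps n \<omega> * T p \<omega>) = 0" if "1 \<le> n" for n p
      using eps_T[OF that, of "k + p"] by (simp add: T_def U_def)
    have ER: "integral\<^sup>L M (\<lambda>\<omega>. eps n \<omega> * R \<omega>) = 0" if "1 \<le> n" for n
      unfolding R_def
      using E_lincomb[where Z="eps n" and W="\<lambda>m. T (h - m)" and I="{..<h}" and c=b] epsL2 TL ET[OF that]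
      by simp
    have ERS: "integral\<^sup>L M (\<lambda>\<omega>. R \<omega> * S \<omega>) = 0"
    proof -
      have "integral\<^sup>L M (\<lambda>\<omega>. R \<omega> * S \<omega>) = (\<Sum>l<h. b l * integral\<^sup>L M (\<lambda>\<omega>. R \<omega> * eps (int k + int h - int l) \<omega>))"
        unfolding S_def
        using E_lincomb[where Z="R" and W="\<lambda>l. eps (int k + int h - int l)" and I="{..<h}" and c=b] RL epsL2
        by simp
      also have "\<dots> = 0"
      proof (intro sum.neutral ballI)
        fix l assume "l \<in> {..<h}"
        hence "1 \<le> int k + int h - int l" by auto
        from ER[OF this] show "b l * integral\<^sup>L M (\<lambda>\<omega>. R \<omega> * eps (int k + int h - int l) \<omega>) = 0"
          by (simp add: mult.commute)
      qed
      finally show ?thesis .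
    qed
    have ESS: "integral\<^sup>L M (\<lambda>\<omega>. S \<omega> * S \<omega>) = \<sigma>\<epsilon>\<^sup>2 * (\<Sum>l<h. (b l)\<^sup>2)"
    proof -
      have "integral\<^sup>L M (\<lambda>\<omega>. S \<omega> * S \<omega>) = (\<Sum>l<h. b l * integral\<^sup>L M (\<lambda>\<omega>. S \<omega> * eps (int k + int h - int l) \<omega>))"
        unfolding S_def[of "\<omega>" for \<omega>, symmetric]
        using E_lincomb[where Z="S" and W="\<lambda>l. eps (int k + int h - int l)" and I="{..<h}" and c=b] SL epsL2
        by (simp add: S_def)
      also have "\<dots> = (\<Sum>l<h. \<sigma>\<epsilon>\<^sup>2 * (b l)\<^sup>2)"
      proof (intro sum.cong refl)
        fix l assume l: "l \<in> {..<h}"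
        have "integral\<^sup>L M (\<lambda>\<omega>. S \<omega> * eps (int k + int h - int l) \<omega>) = integral\<^sup>L M (\<lambda>\<omega>. eps (int k + int h - int l) \<omega> * S \<omega>)"
          by (simp add: mult.commute)
        also have "\<dots> = (\<Sum>l'<h. b l' * integral\<^sup>L M (\<lambda>\<omega>. eps (int k + int h - int l) \<omega> * eps (int k + int h - int l') \<omega>))"
          unfolding S_def
          using E_lincomb[where Z="eps (int k + int h - int l)" and W="\<lambda>l. eps (int k + int h - int l)" and I="{..<h}" and c=b] epsL2
          by simp
        also have "\<dots> = (\<Sum>l'<h. if l = l' then b l' * \<sigma>\<epsilon>\<^sup>2 else 0)"
          by (intro sum.cong refl) (auto simp: eps_cov)
        also have "\<dots> = b l * \<sigma>\<epsilon>\<^sup>2" using l by simp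
        finally show "b l * integral\<^sup>L M (\<lambda>\<omega>. S \<omega> * eps (int k + int h - int l) \<omega>) = \<sigma>\<epsilon>\<^sup>2 * (b l)\<^sup>2"
          by (simp add: power2_eq_square)
      qed
      finally show ?thesis by (simp add: sum_distrib_left)
    qed
    have iRR: "integrable M (\<lambda>\<omega>. R \<omega> * R \<omega>)" by (rule L2_mult_int[OF RL RL])
    have iSS: "integrable M (\<lambda>\<omega>. S \<omega> * S \<omega>)" by (rule L2_mult_int[OF SL SL])
    have iRS: "integrable M (\<lambda>\<omega>. R \<omega> * S \<omega>)" by (rule L2_mult_int[OF RL SL])
    have "(\<lambda>\<omega>. (tWK_pred a X k h \<omega> - X (int k + int h) \<omega>)\<^sup>2) = (\<lambda>\<omega>. R \<omega> * R \<omega> + S \<omega> * S \<omega> - 2 * (R \<omega> * S \<omega>))"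
    proof
      fix \<omega>
      have dd: "tWK_pred a X k h \<omega> - X (int k + int h) \<omega> = R \<omega> - S \<omega>" using pw[of \<omega>] by simp
      show "(tWK_pred a X k h \<omega> - X (int k + int h) \<omega>)\<^sup>2 = R \<omega> * R \<omega> + S \<omega> * S \<omega> - 2 * (R \<omega> * S \<omega>)"
        by (subst dd) (simp add: power2_eq_square algebra_simps)
    qed
    hence "integral\<^sup>L M (\<lambda>\<omega>. (tWK_pred a X k h \<omega> - X (int k + int h) \<omega>)\<^sup>2)
        = integral\<^sup>L M (\<lambda>\<omega>. R \<omega> * R \<omega>) + integral\<^sup>L M (\<lambda>\<omega>. S \<omega> * S \<omega>) - 2 * integral\<^sup>L M (\<lambda>\<omega>. R \<omega> * S \<omega>)"
      using iRR iSS iRS by simp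
    thus ?thesis using ERS ESS by (simp add: power2_eq_square)
  qed
  show ?thesis using sums var pw by (intro exI[of _ R] conjI AE_I2) (auto simp: S_def)
qed


end
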